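(* Let $\bm{H}$ be a random matrix with values in $\mathbb{C}^{N_R\times N_T}$ (flat-fading MIMO channel), let $\lambda_{\max}$ be the maximum eigenvalue of $\bm{H}\bm{H}^\ast$, and let $W>0$, $\rho>0$ be constants. Consider the capacity with full channel side information $$c=W\max_{\bm{R}\succeq 0,\ \operatorname{Tr}[\bm{R}]=N_T}\log_2\det\Big(\bm{I}_{N_R}+\frac{\rho}{N_T}\bm{H}\bm{R}\bm{H}^\ast\Big),$$ where the maximum is over Hermitian positive semidefinite $\bm{R}\in\mathbb{C}^{N_T\times N_T}$, and the capacity with channel side information only at the receiver $$c=W\log_2\det\Big(\bm{I}_{N_R}+\frac{\rho}{N_T}\bm{H}\bm{H}^\ast\Big).$$ If $\mathbb{E}[(1+\lambda_{\max})^\theta]<\infty$ for some $\theta>0$, then the distribution of the capacity (in either case) is light-tailed.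
   Context: A nonnegative random variable $X$ is light-tailed if $\Pr(X>x)=O(e^{-\theta x})$ for some $\theta>0$, equivalently $\mathbb{E}[e^{\theta X}]<\infty$ for some $\theta>0$. Here $W$ is the bandwidth and $\rho=P/(N_0W)$ with $P$ the total average transmit power and $N_0$ the noise power spectral density. *)

theory Defs
  imports "HOL-Probability.Probability" "HOL-Library.Landau_Symbols"
begin

definition conj_tr :: "complex^'n^'m \<Rightarrow> complex^'m^'n" where
  "conj_tr A = (\<chi> i j. cnj (A $ j $ i))"

definition herm_psd :: "complex^'n^'n \<Rightarrow> bool" where
  "herm_psd R \<longleftrightarrow> conj_tr R = R \<and>
     (\<forall>x::complex^'n. 0 \<le> Re (\<Sum>i\<in>UNIV. \<Sum>j\<in>UNIV. cnj (x $ i) * R $ i $ j * x $ j))"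

definition lambda_max :: "complex^'t^'r \<Rightarrow> real" where
  "lambda_max H = Max {l::real. \<exists>v::complex^'r. v \<noteq> 0 \<and>
      (H ** conj_tr H) *v v = complex_of_real l *s v}"

definition cap_full :: "real \<Rightarrow> real \<Rightarrow> complex^'t^'r \<Rightarrow> real" where
  "cap_full W \<rho> H = W * (SUP R \<in> {R::complex^'t^'t. herm_psd R \<and> trace R = of_nat CARD('t)}.
      log 2 (Re (det (mat 1 + (\<rho> / real CARD('t)) *\<^sub>R (H ** R ** conj_tr H)))))"

definition cap_rx :: "real \<Rightarrow> real \<Rightarrow> complex^'t^'r \<Rightarrow> real" where
  "cap_rx W \<rho> H = W *
      log 2 (Re (det (mat 1 + (\<rho> / real CARD('t)) *\<^sub>R (H ** conj_tr H))))"

definition light_tailed :: "'a measure \<Rightarrow> ('a \<Rightarrow> real) \<Rightarrow> bool" where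
  "light_tailed M X \<longleftrightarrow> (\<exists>\<theta>>0. (\<lambda>x. measure M {\<omega>\<in>space M. X \<omega> > x}) \<in> O[at_top](\<lambda>x. exp (- \<theta> * x)))"

end

theory Submission imports Defs begin

lemma mv_scaleR: fixes A :: "complex^'n^'m"
  shows "A *v (c *\<^sub>R x) = c *\<^sub>R (A *v x)"
  by (simp add: vec_eq_iff matrix_vector_mult_def scaleR_sum_right)

lemma cs: "r *\<^sub>R (z::complex) = complex_of_real r * z"
  by (simp add: scaleR_conv_of_real)

lemma ofreal_smult: "(complex_of_real l *s (v::complex^'n)) = l *\<^sub>R v"
  by (simp add: vec_eq_iff cs)

lemma inn: "inner a (b::complex) = Re (cnj a * b)"
    by (simp add: inner_complex_def)
lemma s1: fixes A :: "complex^'n^'n" shows "inner x (A *v y) = Re (\<Sum>i\<in>UNIV. \<Sum>j\<in>UNIV. cnj (x$i) * A$i$j * y$j)"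
  unfolding inner_vec_def matrix_vector_mult_def inn Re_sum
  by (simp add: sum_distrib_left mult.assoc Re_sum)
lemma herm_sym:
  fixes A :: "complex^'n^'n"
  assumes "conj_tr A = A"
  shows "inner x (A *v y) = inner y (A *v x)"
proof -
  have h: "cnj (A $ j $ i) = A $ i $ j" for i j
  proof -
    have "conj_tr A $ i $ j = A $ i $ j" using assms by simp
    then show ?thesis by (simp add: conj_tr_def)
  qed
  have "inner x (A *v y) = Re (\<Sum>i\<in>UNIV. \<Sum>j\<in>UNIV. cnj (x$i) * A$i$j * y$j)" by (rule s1)
  also have "\<dots> = Re (\<Sum>j\<in>UNIV. \<Sum>i\<in>UNIV. cnj (x$i) * A$i$j * y$j)"
    by (subst sum.swap) (rule refl)
  also have "\<dots> = Re (\<Sum>j\<in>UNIV. \<Sum>i\<in>UNIV. y$j * A$i$j * cnj (x$i))"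
    by (intro arg_cong[where f=Re] sum.cong refl) (simp add: mult_ac)
  also have "\<dots> = Re (cnj (\<Sum>j\<in>UNIV. \<Sum>i\<in>UNIV. cnj (y$j) * A$j$i * x$i))"
    by (simp only: cnj_sum complex_cnj_mult complex_cnj_cnj h)
  also have "\<dots> = Re (\<Sum>j\<in>UNIV. \<Sum>i\<in>UNIV. cnj (y$j) * A$j$i * x$i)"
    by (simp only: cnj.sel(1))
  also have "\<dots> = inner y (A *v x)" by (rule s1[symmetric])
  finally show ?thesis .
qed

lemma eig_finite:
  fixes A :: "complex^'n^'n"
  assumes "conj_tr A = A"
  shows "finite {l::real. \<exists>v. v \<noteq> 0 \<and> A *v v = complex_of_real l *s v}"
proof -
  let ?E = "{l::real. \<exists>v. v \<noteq> 0 \<and> A *v v = complex_of_real l *s v}"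
  define f where "f l = (SOME v. v \<noteq> 0 \<and> A *v v = l *\<^sub>R v)" for l
  have f: "f l \<noteq> 0 \<and> A *v f l = l *\<^sub>R f l" if "l \<in> ?E" for l
    using that unfolding f_def ofreal_smult by (metis (mono_tags, lifting) mem_Collect_eq someI_ex)
  have inj: "inj_on f ?E"
  proof (rule inj_onI)
    fix a b assume a: "a \<in> ?E" and b: "b \<in> ?E" and e: "f a = f b"
    have "a *\<^sub>R f a = b *\<^sub>R f a" using f[OF a] f[OF b] e by metis
    then have "(a - b) *\<^sub>R f a = 0" by (simp add: algebra_simps)
    then show "a = b" using f[OF a] by simp
  qed
  have orth: "pairwise orthogonal (f ` ?E)"
  proof (rule pairwiseI)
    fix x y assume "x \<in> f ` ?E" "y \<in> f ` ?E" and ne: "x \<noteq> y"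
    then obtain a b where a: "a \<in> ?E" and b: "b \<in> ?E" and xy: "x = f a" "y = f b" by blast
    from ne xy have ne: "f a \<noteq> f b" by simp
    have "a \<noteq> b" using ne by auto
    have "inner (f a) (A *v f b) = b * inner (f a) (f b)" using f[OF b] by simp
    moreover have "inner (f b) (A *v f a) = a * inner (f b) (f a)" using f[OF a] by simp
    ultimately have "(a - b) * inner (f a) (f b) = 0"
      using herm_sym[OF assms, of "f a" "f b"] by (simp add: inner_commute algebra_simps)
    then show "orthogonal x y" unfolding xy using \<open>a \<noteq> b\<close> by (simp add: orthogonal_def)
  qed
  have "0 \<notin> f ` ?E" using f by force
  then have "independent (f ` ?E)" using pairwise_orthogonal_independent orth by blast
  then have "finite (f ` ?E)" using independent_bound by blast
  then show ?thesis using finite_image_iff inj by blast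
qed


lemma mv_linear: fixes A :: "complex^'n^'m" shows "bounded_linear (\<lambda>x. A *v x)"
proof -
  have "linear (\<lambda>x. A *v x)"
    by (rule linearI) (simp_all add: matrix_vector_right_distrib mv_scaleR)
  then show ?thesis using linear_conv_bounded_linear by blast
qed

lemma rayleigh_max:
  fixes A :: "complex^'n^'n"
  assumes herm: "conj_tr A = A"
  shows "\<exists>\<mu> v. v \<noteq> 0 \<and> A *v v = \<mu> *\<^sub>R v \<and> (\<forall>x. inner x (A *v x) \<le> \<mu> * (norm x)^2)"
proof -
  define Q where "Q x = inner x (A *v x)" for x :: "complex^'n"
  have cont: "continuous_on (sphere 0 1) Q"
    unfolding Q_def
    by (intro continuous_intros linear_continuous_on mv_linear)
  have ne: "sphere (0::complex^'n) 1 \<noteq> {}" by simp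
  obtain v where v: "v \<in> sphere 0 1" and vmax: "\<And>y. y \<in> sphere 0 1 \<Longrightarrow> Q y \<le> Q v"
    using continuous_attains_sup[OF compact_sphere ne cont] by blast
  define \<mu> where "\<mu> = Q v"
  have nv: "norm v = 1" using v by simp
  have Qs: "Q (c *\<^sub>R x) = c^2 * Q x" for c x
    unfolding Q_def by (simp add: mv_scaleR power2_eq_square)
  have bound: "Q x \<le> \<mu> * (norm x)^2" for x
  proof (cases "x = 0")
    case True then show ?thesis by (simp add: Q_def)
  next
    case False
    let ?u = "(1 / norm x) *\<^sub>R x"
    have "?u \<in> sphere 0 1" using False by simp
    then have "Q ?u \<le> \<mu>" using vmax \<mu>_def by blast
    then have "(1/norm x)^2 * Q x \<le> \<mu>" by (simp add: Qs)
    then show ?thesis using False by (simp add: field_simps power2_eq_square)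
  qed
  define r where "r = A *v v - \<mu> *\<^sub>R v"
  define s where "s = (norm r)^2"
  define c where "c = Q r - \<mu> * s"
  have key: "2 * t * s + t^2 * c \<le> 0" for t
  proof -
    have e1: "Q (v + t *\<^sub>R r) = Q v + 2 * t * inner r (A *v v) + t^2 * Q r"
      unfolding Q_def using herm_sym[OF herm, of v r]
      by (simp add: matrix_vector_right_distrib mv_scaleR inner_add_left inner_add_right
          power2_eq_square algebra_simps)
    have e2: "(norm (v + t *\<^sub>R r))^2 = 1 + 2 * t * inner r v + t^2 * s"
    proof -
      have "(norm (v + t *\<^sub>R r))^2 = inner (v + t *\<^sub>R r) (v + t *\<^sub>R r)"
        by (rule power2_norm_eq_inner)
      also have "\<dots> = inner v v + 2 * t * inner r v + t^2 * inner r r"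
        by (simp add: inner_add_left inner_add_right inner_commute power2_eq_square algebra_simps)
      also have "inner v v = 1" using nv by (simp flip: power2_norm_eq_inner)
      also have "inner r r = s" unfolding s_def by (simp flip: power2_norm_eq_inner)
      finally show ?thesis .
    qed
    have e3: "inner r (A *v v) = \<mu> * inner r v + s"
      unfolding s_def power2_norm_eq_inner r_def
      by (simp add: inner_diff_left inner_diff_right algebra_simps)
    have "Q (v + t *\<^sub>R r) \<le> \<mu> * (norm (v + t *\<^sub>R r))^2" by (rule bound)
    then show ?thesis unfolding e1 e2 e3 c_def \<mu>_def[symmetric]
      by (simp add: algebra_simps)
  qed
  have "s = 0"
  proof (rule ccontr)
    assume "s \<noteq> 0"
    then have sp: "s > 0" unfolding s_def by simp
    define t where "t = s / (\<bar>c\<bar> + 1)"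
    have tp: "t > 0" using sp by (simp add: t_def add_pos_nonneg)
    have "t * \<bar>c\<bar> \<le> s" unfolding t_def using sp
      by (simp add: field_simps)
    moreover have "t * (- \<bar>c\<bar>) \<le> t * c"
      by (rule mult_left_mono) (use tp in auto)
    ultimately have "2 * s + t * c > 0" using sp by simp
    then have "t * (2 * s + t * c) > 0" using tp by simp
    moreover have "2 * t * s + t^2 * c = t * (2 * s + t * c)"
      by (simp add: power2_eq_square algebra_simps)
    ultimately have "2 * t * s + t^2 * c > 0" by simp
    then show False using key[of t] by simp
  qed
  then have "r = 0" unfolding s_def by simp
  then have "A *v v = \<mu> *\<^sub>R v" unfolding r_def by simp
  moreover have "v \<noteq> 0" using nv by auto
  ultimately show ?thesis using bound unfolding Q_def by blast
qed


lemma HH_herm: fixes H :: "complex^'t^'r" shows "conj_tr (H ** conj_tr H) = H ** conj_tr H"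
  by (simp add: vec_eq_iff conj_tr_def matrix_matrix_mult_def cnj_sum mult.commute)

lemma lam_bound:
  fixes H :: "complex^'t^'r"
  shows "(norm (H$i$k))^2 \<le> lambda_max H"
proof -
  let ?A = "H ** conj_tr H"
  let ?E = "{l::real. \<exists>v::complex^'r. v \<noteq> 0 \<and> ?A *v v = complex_of_real l *s v}"
  obtain \<mu> v where v: "v \<noteq> 0" "?A *v v = \<mu> *\<^sub>R v"
    and b: "\<And>x. inner x (?A *v x) \<le> \<mu> * (norm x)^2"
    using rayleigh_max[OF HH_herm[of H]] by blast
  have "\<mu> \<in> ?E" using v by (auto simp: ofreal_smult)
  moreover have "finite ?E" using eig_finite[OF HH_herm[of H]] .
  ultimately have mu: "\<mu> \<le> lambda_max H" unfolding lambda_max_def by (rule Max_ge[rotated])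
  define e :: "complex^'r" where "e = axis i 1"
  have ne: "(norm e)^2 = 1" unfolding power2_norm_eq_inner e_def
    by (simp add: inner_vec_def axis_def inner_complex_def if_distrib cong: if_cong)
  have "inner e (?A *v e) = Re (?A $ i $ i)" unfolding e_def inner_axis' complex_inner_1
    by (simp add: matrix_vector_mult_def axis_def if_distrib cong: if_cong)
  also have "\<dots> = (\<Sum>j\<in>UNIV. (norm (H$i$j))^2)"
    by (simp add: matrix_matrix_mult_def conj_tr_def Re_sum complex_mult_cnj cmod_power2)
  finally have "(\<Sum>j\<in>UNIV. (norm (H$i$j))^2) \<le> \<mu>" using b[of e] ne by simp
  moreover have "(norm (H$i$k))^2 \<le> (\<Sum>j\<in>UNIV. (norm (H$i$j))^2)"
    by (rule member_le_sum) auto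
  ultimately show ?thesis using mu by linarith
qed


lemma quad2:
  fixes R :: "complex^'n^'n"
  assumes x_def: "x = ((\<chi> i. (if i = k then a else 0) + (if i = l then b else 0)) :: complex^'n)"
  shows "(\<Sum>i\<in>UNIV. \<Sum>j\<in>UNIV. cnj (x $ i) * R$i$j * x $ j) =
     cnj a * R$k$k * a + cnj a * R$k$l * b + cnj b * R$l$k * a + cnj b * R$l$l * b"
proof -
  have inner: "(\<Sum>j\<in>UNIV. c * R$i$j * x $ j) = c * R$i$k * a + c * R$i$l * b" for c i
    unfolding x_def by (simp add: distrib_left sum.distrib if_distrib[where f="\<lambda>y. _ * y"] cong: if_cong)
  show ?thesis unfolding inner
    unfolding x_def by (simp add: distrib_left distrib_right sum.distrib if_distrib[where f=cnj] if_distrib[where f="\<lambda>y. y * _"] cong: if_cong)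
qed

lemma R_bound:
  fixes R :: "complex^'t^'t"
  assumes psd: "herm_psd R" and tr: "trace R = of_nat CARD('t)"
  shows "norm (R$k$l) \<le> 2 * real CARD('t)"
proof -
  define N where "N = real CARD('t)"
  have herm: "cnj (R$j$i) = R$i$j" for i j
  proof -
    have "conj_tr R $ i $ j = R $ i $ j" using psd by (simp add: herm_psd_def)
    then show ?thesis by (simp add: conj_tr_def)
  qed
  have Q: "0 \<le> Re (cnj a * R$k$k * a + cnj a * R$k$l * b + cnj b * R$l$k * a + cnj b * R$l$l * b)"
    for a b k l
  proof -
    let ?x = "((\<chi> i. (if i = k then a else 0) + (if i = l then b else 0)) :: complex^'t)"
    have "0 \<le> Re (\<Sum>i\<in>UNIV. \<Sum>j\<in>UNIV. cnj (?x $ i) * R$i$j * ?x $ j)"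
      using psd unfolding herm_psd_def by blast
    then show ?thesis unfolding quad2[OF refl] .
  qed
  have d0: "0 \<le> Re (R$i$i)" for i using Q[where a=1 and b=0 and k=i and l=i] by simp
  have dN: "Re (R$i$i) \<le> N" for i
  proof -
    have "Re (trace R) = N" using tr by (simp add: N_def)
    then have "(\<Sum>j\<in>UNIV. Re (R$j$j)) = N" by (simp add: trace_def Re_sum)
    moreover have "Re (R$i$i) \<le> (\<Sum>j\<in>UNIV. Re (R$j$j))"
      by (rule member_le_sum) (auto intro: d0)
    ultimately show ?thesis by simp
  qed
  have lk: "R$l$k = cnj (R$k$l)" using herm[of k l] by simp
  have q1: "0 \<le> Re (R$k$k) + Re (R$l$l) + 2 * Re (R$k$l)"
    using Q[where a=1 and b=1 and k=k and l=l] by (simp add: lk)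
  have q2: "0 \<le> Re (R$k$k) + Re (R$l$l) - 2 * Re (R$k$l)"
    using Q[where a=1 and b="-1" and k=k and l=l] by (simp add: lk)
  have q3: "0 \<le> Re (R$k$k) + Re (R$l$l) - 2 * Im (R$k$l)"
    using Q[where a=1 and b="\<i>" and k=k and l=l] by (simp add: lk)
  have q4: "0 \<le> Re (R$k$k) + Re (R$l$l) + 2 * Im (R$k$l)"
    using Q[where a=1 and b="-\<i>" and k=k and l=l] by (simp add: lk)
  have "\<bar>Re (R$k$l)\<bar> \<le> N" "\<bar>Im (R$k$l)\<bar> \<le> N"
    using q1 q2 q3 q4 dN[of k] dN[of l] by linarith+
  moreover have "norm (R$k$l) \<le> \<bar>Re (R$k$l)\<bar> + \<bar>Im (R$k$l)\<bar>" by (rule cmod_le)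
  ultimately show ?thesis unfolding N_def by linarith
qed


lemma det_bound:
  fixes M :: "complex^'n^'n"
  assumes b: "\<And>i j. norm (M$i$j) \<le> K"
  shows "norm (det M) \<le> fact CARD('n) * K ^ CARD('n)"
proof -
  let ?P = "{p. p permutes (UNIV::'n set)}"
  have "norm (det M) \<le> (\<Sum>p\<in>?P. norm (of_int (sign p) * (\<Prod>i\<in>UNIV. M$i$p i) :: complex))"
    unfolding det_def by (rule norm_sum)
  also have "\<dots> \<le> (\<Sum>p\<in>?P. K ^ CARD('n))"
  proof (rule sum_mono)
    fix p :: "'n \<Rightarrow> 'n"
    have sg: "\<bar>real_of_int (sign p)\<bar> = 1" by (metis abs_sign of_int_abs of_int_1)
    have "norm (of_int (sign p) * (\<Prod>i\<in>UNIV. M$i$p i) :: complex) = (\<Prod>i\<in>UNIV. norm (M$i$p i))"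
      by (simp add: norm_mult sg flip: prod_norm)
    also have "\<dots> \<le> (\<Prod>i\<in>(UNIV::'n set). K)"
      by (rule prod_mono) (simp add: b)
    finally show "norm (of_int (sign p) * (\<Prod>i\<in>UNIV. M$i$p i) :: complex) \<le> K ^ CARD('n)" by simp
  qed
  also have "\<dots> = fact CARD('n) * K ^ CARD('n)"
    by (simp add: card_permutations)
  finally show ?thesis .
qed

lemma entry_bound:
  fixes H :: "complex^'t^'r" and R :: "complex^'t^'t"
  assumes hb: "\<And>i k. norm (H$i$k) \<le> L" and rb: "\<And>k l. norm (R$k$l) \<le> B" and c: "c \<ge> 0"
  shows "norm ((mat 1 + c *\<^sub>R (H ** R ** conj_tr H)) $ i $ j)
         \<le> 1 + c * (real CARD('t) * real CARD('t) * (L * B * L))"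
proof -
  have L0: "0 \<le> L" by (meson hb norm_ge_zero order_trans)
  have B0: "0 \<le> B" by (meson rb norm_ge_zero order_trans)
  have m: "norm (mat 1 $ i $ j :: complex) \<le> 1" by (simp add: mat_def)
  have "norm ((H ** R ** conj_tr H) $ i $ j) \<le>
        (\<Sum>l\<in>UNIV. \<Sum>k\<in>UNIV. norm (H$i$k) * norm (R$k$l) * norm (H$j$l))"
  proof -
    have "(H ** R ** conj_tr H) $ i $ j = (\<Sum>l\<in>UNIV. \<Sum>k\<in>UNIV. H$i$k * R$k$l * cnj (H$j$l))"
      by (simp add: matrix_matrix_mult_def conj_tr_def sum_distrib_right)
    also have "norm \<dots> \<le> (\<Sum>l\<in>UNIV. norm (\<Sum>k\<in>UNIV. H$i$k * R$k$l * cnj (H$j$l)))"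
      by (rule norm_sum)
    also have "\<dots> \<le> (\<Sum>l\<in>UNIV. \<Sum>k\<in>UNIV. norm (H$i$k * R$k$l * cnj (H$j$l)))"
      by (intro sum_mono norm_sum)
    finally show ?thesis by (simp add: norm_mult)
  qed
  also have "\<dots> \<le> (\<Sum>l\<in>(UNIV::'t set). \<Sum>k\<in>(UNIV::'t set). L * B * L)"
    by (intro sum_mono mult_mono hb rb) (auto simp: L0 B0)
  also have "\<dots> = real CARD('t) * real CARD('t) * (L * B * L)" by simp
  finally have e: "norm ((H ** R ** conj_tr H) $ i $ j) \<le> real CARD('t) * real CARD('t) * (L * B * L)" .
  have "norm ((mat 1 + c *\<^sub>R (H ** R ** conj_tr H)) $ i $ j)
      \<le> norm (mat 1 $ i $ j :: complex) + c * norm ((H ** R ** conj_tr H) $ i $ j)"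
    using norm_triangle_ineq[of "mat 1 $ i $ j :: complex" "c *\<^sub>R (H ** R ** conj_tr H) $ i $ j"] c
    by simp
  also have "\<dots> \<le> 1 + c * (real CARD('t) * real CARD('t) * (L * B * L))"
    using m e c by (intro add_mono mult_left_mono) auto
  finally show ?thesis .
qed

lemma log_abs2: "x \<noteq> 0 \<Longrightarrow> log b x = log b \<bar>x\<bar>"
proof -
  assume "x \<noteq> 0"
  then have "exp (ln x) = \<bar>x\<bar>" by (rule exp_ln_abs)
  then have "ln x = ln \<bar>x\<bar>" by (metis ln_exp)
  then show ?thesis by (simp add: log_def)
qed


lemma ge1mult: "(1::real) \<le> x \<Longrightarrow> 1 \<le> y \<Longrightarrow> 1 \<le> x * y"
  using mult_mono[of 1 x 1 y] by simp

definition cD :: "real \<Rightarrow> nat \<Rightarrow> nat \<Rightarrow> real" where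
  "cD \<rho> t r = fact r * (1 + (\<rho> / real t) * (real t * real t * (2 * real t))) ^ r"

lemma cap_bound:
  fixes H :: "complex^'t^'r" and R :: "complex^'t^'t"
  assumes R: "herm_psd R" "trace R = of_nat CARD('t)" and rho: "\<rho> > 0"
  shows "log 2 (Re (det (mat 1 + (\<rho> / real CARD('t)) *\<^sub>R (H ** R ** conj_tr H))))
     \<le> log 2 (cD \<rho> CARD('t) CARD('r)) + 2 * real CARD('r) * log 2 (1 + lambda_max H)"
proof -
  define N where "N = real CARD('t)"
  define n where "n = CARD('r)"
  define c where "c = \<rho> / N"
  define L where "L = 1 + lambda_max H"
  define a where "a = c * (N * N * (2 * N))"
  have N0: "N > 0" unfolding N_def by simp
  have c0: "c \<ge> 0" unfolding c_def using rho N0 by simp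
  have a0: "a \<ge> 0" unfolding a_def using c0 N0 by simp
  have lam0: "lambda_max H \<ge> 0"
    using lam_bound[of H undefined undefined] by (meson order_trans zero_le_power2)
  have L1: "L \<ge> 1" unfolding L_def using lam0 by simp
  have hb: "norm (H$i$k) \<le> L" for i k
  proof (cases "norm (H$i$k) \<le> 1")
    case True then show ?thesis using L1 by simp
  next
    case False
    then have "norm (H$i$k) \<le> (norm (H$i$k))^2"
      using mult_left_mono[of 1 "norm (H$i$k)" "norm (H$i$k)"] by (simp add: power2_eq_square)
    also have "\<dots> \<le> lambda_max H" by (rule lam_bound)
    finally show ?thesis unfolding L_def by simp
  qed
  have rb: "norm (R$k$l) \<le> 2 * N" for k l unfolding N_def by (rule R_bound[OF R])
  define K where "K = (1 + a) * L^2"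
  have eb: "norm ((mat 1 + c *\<^sub>R (H ** R ** conj_tr H)) $ i $ j) \<le> K" for i j
  proof -
    have "norm ((mat 1 + c *\<^sub>R (H ** R ** conj_tr H)) $ i $ j)
         \<le> 1 + c * (real CARD('t) * real CARD('t) * (L * (2 * N) * L))"
      by (rule entry_bound[OF hb rb c0])
    also have "\<dots> = 1 + a * L^2" unfolding a_def N_def by (simp add: power2_eq_square algebra_simps)
    also have "\<dots> \<le> K" unfolding K_def using L1 a0
      by (simp add: algebra_simps one_le_power)
    finally show ?thesis .
  qed
  have "norm (det (mat 1 + c *\<^sub>R (H ** R ** conj_tr H))) \<le> fact n * K ^ n"
    unfolding n_def by (rule det_bound[OF eb])
  also have "fact n * K ^ n = cD \<rho> CARD('t) CARD('r) * L ^ (2 * n)"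
    unfolding K_def cD_def a_def c_def N_def n_def
    by (simp add: power_mult_distrib power_mult)
  finally have db: "norm (det (mat 1 + c *\<^sub>R (H ** R ** conj_tr H))) \<le> cD \<rho> CARD('t) CARD('r) * L ^ (2 * n)" .
  have D1: "cD \<rho> CARD('t) CARD('r) \<ge> 1"
    unfolding cD_def using a0 unfolding a_def c_def N_def
    by (intro ge1mult) (auto intro: one_le_power)
  have LP1: "L ^ (2 * n) \<ge> 1" using L1 by (rule one_le_power)
  have eq: "log 2 (cD \<rho> CARD('t) CARD('r) * L ^ (2 * n)) =
     log 2 (cD \<rho> CARD('t) CARD('r)) + 2 * real CARD('r) * log 2 L"
    using D1 L1 by (simp add: log_mult log_nat_power n_def)
  define X where "X = Re (det (mat 1 + c *\<^sub>R (H ** R ** conj_tr H)))"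
  have "log 2 X \<le> log 2 (cD \<rho> CARD('t) CARD('r) * L ^ (2 * n))"
  proof (cases "X = 0")
    case True
    have "0 \<le> log 2 (cD \<rho> CARD('t) CARD('r) * L ^ (2 * n))"
      using ge1mult[OF D1 LP1] by simp
    moreover have "log 2 (0::real) = 0" by (simp add: log_def)
    ultimately show ?thesis using True by simp
  next
    case False
    have "\<bar>X\<bar> \<le> cD \<rho> CARD('t) CARD('r) * L ^ (2 * n)"
      using db abs_Re_le_cmod[of "det (mat 1 + c *\<^sub>R (H ** R ** conj_tr H))"] unfolding X_def
      by linarith
    then have "log 2 \<bar>X\<bar> \<le> log 2 (cD \<rho> CARD('t) CARD('r) * L ^ (2 * n))"
      using False by (subst log_le_cancel_iff) auto
    then show ?thesis using log_abs2[OF False] by simp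
  qed
  then have "log 2 X \<le> log 2 (cD \<rho> CARD('t) CARD('r)) + 2 * real CARD('r) * log 2 L"
    using eq by simp
  then show ?thesis unfolding X_def c_def N_def L_def .
qed

lemma tail:
  fixes M :: "'a measure" and X Lf :: "'a \<Rightarrow> real"
  assumes P: "prob_space M" and intY: "integrable M (\<lambda>\<omega>. Lf \<omega> powr \<theta>)"
    and th: "\<theta> > 0" and b: "b > 0"
    and L1: "\<And>\<omega>. \<omega> \<in> space M \<Longrightarrow> Lf \<omega> \<ge> 1"
    and Xb: "\<And>\<omega>. \<omega> \<in> space M \<Longrightarrow> X \<omega> \<le> a + b * ln (Lf \<omega>)"
  shows "light_tailed M X"
proof -
  interpret prob_space M by (rule P)
  define k where "k = \<theta> / b"
  define c0 where "c0 = exp (- \<theta> * a / b)"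
  define E where "E = (\<integral>\<omega>. Lf \<omega> powr \<theta> \<partial>M)"
  have k0: "k > 0" unfolding k_def using th b by simp
  have c0p: "c0 > 0" unfolding c0_def by simp
  have meas: "(\<lambda>\<omega>. Lf \<omega> powr \<theta>) \<in> borel_measurable M" using intY by auto
  have mb: "measure M {\<omega>\<in>space M. X \<omega> > x} \<le> E / c0 * exp (- k * x)" for x
  proof -
    let ?T = "{\<omega>\<in>space M. c0 * exp (k * x) \<le> Lf \<omega> powr \<theta>}"
    have sub: "{\<omega>\<in>space M. X \<omega> > x} \<subseteq> ?T"
    proof safe
      fix \<omega> assume w: "\<omega> \<in> space M" and xw: "x < X \<omega>"
      have Lp: "Lf \<omega> > 0" using L1[OF w] by simp
      have "x < a + b * ln (Lf \<omega>)" using xw Xb[OF w] by simp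
      then have "(x - a) / b < ln (Lf \<omega>)" using b by (simp add: field_simps)
      then have "\<theta> * ((x - a) / b) \<le> \<theta> * ln (Lf \<omega>)"
        by (intro mult_left_mono) (use th in auto)
      moreover have "\<theta> * ((x - a) / b) = k * x + (- \<theta> * a / b)"
        unfolding k_def using b by (simp add: field_simps)
      ultimately have "exp (k * x + (- \<theta> * a / b)) \<le> exp (\<theta> * ln (Lf \<omega>))" by simp
      moreover have "c0 * exp (k * x) = exp (k * x + (- \<theta> * a / b))"
        unfolding c0_def by (simp add: mult.commute flip: exp_add)
      moreover have "Lf \<omega> powr \<theta> = exp (\<theta> * ln (Lf \<omega>))"
        using Lp by (simp add: powr_def mult.commute)
      ultimately show "c0 * exp (k * x) \<le> Lf \<omega> powr \<theta>" by simp
    qed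
    have Tm: "?T \<in> sets M" using meas by measurable
    have "measure M {\<omega>\<in>space M. X \<omega> > x} \<le> measure M ?T"
      by (rule finite_measure_mono[OF sub Tm])
    also have "\<dots> \<le> E / (c0 * exp (k * x))"
      unfolding E_def
      by (rule integral_Markov_inequality_measure[OF intY, of "space M"]) (auto simp: c0p)
    also have "\<dots> = E / c0 * exp (- k * x)"
      by (simp add: exp_minus field_simps)
    finally show ?thesis .
  qed
  have "(\<lambda>x. measure M {\<omega>\<in>space M. X \<omega> > x}) \<in> O[at_top](\<lambda>x. exp (- k * x))"
  proof (rule bigoI)
    show "\<forall>\<^sub>F x in at_top. norm (measure M {\<omega>\<in>space M. X \<omega> > x}) \<le> E / c0 * norm (exp (- k * x))"
      using mb by (intro always_eventually) simp
  qed
  then show ?thesis unfolding light_tailed_def using k0 by blast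
qed

lemma mat1_ok: "herm_psd (mat 1 :: complex^'t^'t) \<and> trace (mat 1 :: complex^'t^'t) = of_nat CARD('t)"
proof -
  have "conj_tr (mat 1 :: complex^'t^'t) = mat 1"
    by (simp add: vec_eq_iff conj_tr_def mat_def)
  moreover have "0 \<le> Re (\<Sum>i\<in>UNIV. \<Sum>j\<in>UNIV. cnj (x $ i) * (mat 1 :: complex^'t^'t) $ i $ j * x $ j)"
    for x :: "complex^'t"
  proof -
    have "(\<Sum>i\<in>UNIV. \<Sum>j\<in>UNIV. cnj (x $ i) * (mat 1 :: complex^'t^'t) $ i $ j * x $ j)
        = (\<Sum>i\<in>UNIV. cnj (x $ i) * x $ i)"
      by (simp add: mat_def if_distrib[where f="\<lambda>y. _ * y"] if_distrib[where f="\<lambda>y. y * _"] cong: if_cong)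
    moreover have "0 \<le> Re (cnj (x $ i) * x $ i)" for i
      by (simp add: mult.commute[of "cnj _"] complex_mult_cnj)
    ultimately show ?thesis by (simp add: Re_sum sum_nonneg)
  qed
  ultimately show ?thesis unfolding herm_psd_def
    by (simp add: trace_def mat_def)
qed

theorem theorem1:
  fixes M :: "'a measure" and H :: "'a \<Rightarrow> complex^'t::finite^'r::finite"
    and W \<rho> \<theta> :: real
  assumes "prob_space M"
    and "H \<in> borel_measurable M"
    and "W > 0" and "\<rho> > 0"
    and "\<theta> > 0"
    and "integrable M (\<lambda>\<omega>. (1 + lambda_max (H \<omega>)) powr \<theta>)"
  shows "light_tailed M (\<lambda>\<omega>. cap_full W \<rho> (H \<omega>)) \<and> light_tailed M (\<lambda>\<omega>. cap_rx W \<rho> (H \<omega>))"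
proof -
  define D where "D = cD \<rho> CARD('t) CARD('r)"
  define a where "a = W * log 2 D"
  define b where "b = W * (2 * real CARD('r)) / ln 2"
  have b0: "b > 0" unfolding b_def using assms(3) by simp
  have lam0: "lambda_max h \<ge> 0" for h :: "complex^'t^'r"
    using lam_bound[of h undefined undefined] by (meson order_trans zero_le_power2)
  have L1: "1 + lambda_max (H \<omega>) \<ge> 1" for \<omega> using lam0 by simp
  have Sb: "W * log 2 (Re (det (mat 1 + (\<rho> / real CARD('t)) *\<^sub>R (H \<omega> ** R ** conj_tr (H \<omega>)))))
        \<le> a + b * ln (1 + lambda_max (H \<omega>))"
    if "herm_psd R \<and> trace R = of_nat CARD('t)" for \<omega> R
  proof -
    have "W * log 2 (Re (det (mat 1 + (\<rho> / real CARD('t)) *\<^sub>R (H \<omega> ** R ** conj_tr (H \<omega>)))))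
       \<le> W * (log 2 D + 2 * real CARD('r) * log 2 (1 + lambda_max (H \<omega>)))"
      unfolding D_def using that cap_bound[of R \<rho> "H \<omega>"] assms(3,4)
      by (intro mult_left_mono) auto
    also have "\<dots> = a + b * ln (1 + lambda_max (H \<omega>))"
      unfolding a_def b_def by (simp add: log_def algebra_simps)
    finally show ?thesis .
  qed
  have cf: "cap_full W \<rho> (H \<omega>) \<le> a + b * ln (1 + lambda_max (H \<omega>))" for \<omega>
  proof -
    let ?S = "{R::complex^'t^'t. herm_psd R \<and> trace R = of_nat CARD('t)}"
    let ?f = "\<lambda>R. log 2 (Re (det (mat 1 + (\<rho> / real CARD('t)) *\<^sub>R (H \<omega> ** R ** conj_tr (H \<omega>)))))"
    have ne: "?S \<noteq> {}" using mat1_ok by blast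
    have "(SUP R\<in>?S. ?f R) \<le> (a + b * ln (1 + lambda_max (H \<omega>))) / W"
    proof (rule cSUP_least[OF ne])
      fix R assume "R \<in> ?S"
      then have "W * ?f R \<le> a + b * ln (1 + lambda_max (H \<omega>))" using Sb by blast
      then show "?f R \<le> (a + b * ln (1 + lambda_max (H \<omega>))) / W"
        using assms(3) by (simp add: field_simps)
    qed
    then show ?thesis unfolding cap_full_def using assms(3) by (simp add: field_simps)
  qed
  have cr: "cap_rx W \<rho> (H \<omega>) \<le> a + b * ln (1 + lambda_max (H \<omega>))" for \<omega>
    using Sb[of "mat 1" \<omega>] mat1_ok unfolding cap_rx_def by (simp add: matrix_mul_rid)
  have "light_tailed M (\<lambda>\<omega>. cap_full W \<rho> (H \<omega>))"
    by (rule tail[OF assms(1) assms(6) assms(5) b0, where a=a]) (use L1 cf in auto)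
  moreover have "light_tailed M (\<lambda>\<omega>. cap_rx W \<rho> (H \<omega>))"
    by (rule tail[OF assms(1) assms(6) assms(5) b0, where a=a]) (use L1 cr in auto)
  ultimately show ?thesis ..
qed

end
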